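(* Let $K=\mathbb{Q}(\rho)$, where $\rho$ is a root of $x^3-ax^2-(a+3)x-1$ with $a\equiv3$ or $21\pmod{27}$, $a>12$ and $\frac{\Delta}{27}$ square-free, where $\Delta=a^2+3a+9$. Put $g_2=\rho$, $g_3=\frac{1+\rho+\rho^2}{3}$. \begin{enumerate} \item If $\alpha=-r\rho+\rho^2$ with $1\leq r\leq\frac{a}{3}$, then $N(\alpha)\leq\frac{2a^3+9a^2+27a+27}{27}=\frac{(2a+3)\Delta}{27}$. \item If $\alpha=-(r+1)g_2+g_3$ with $0\leq r\leq\frac{a}{3}-1$, then $N(\alpha)<\frac{(2a+3)\Delta}{27}$. \end{enumerate}
   Context: $N$ denotes the norm from $K$ to $\mathbb{Q}$. *)

theory Defs
  imports "HOL-Computational_Algebra.Computational_Algebra"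
begin

definition cubic :: "int \<Rightarrow> complex poly" where
  "cubic a = [:-1, - of_int (a + 3), - of_int a, 1:]"

text \<open>Norm from K = Q(rho) to Q of the element p(rho), p a rational polynomial:
  the product of its images under the embeddings of K into C, i.e. of p(z)
  over the (three distinct) complex roots z of the defining cubic.\<close>
definition normK :: "int \<Rightarrow> rat poly \<Rightarrow> complex" where
  "normK a p = (\<Prod>z\<in>{z. poly (cubic a) z = 0}. poly (map_poly of_rat p) z)"

end

theory Submission imports Defs begin

lemma disc_aux:
  fixes z1 z2 z3 A :: complex
  assumes "z1 + z2 + z3 = A" "z1*z2 + z1*z3 + z2*z3 = - A - 3" "z1*z2*z3 = 1"
  shows "((z1-z2)*(z1-z3)*(z2-z3))^2 = (A^2+3*A+9)^2"
proof -
  have "((z1-z2)*(z1-z3)*(z2-z3))^2 = (z1+z2+z3)^2*(z1*z2 + z1*z3 + z2*z3)^2 - 4*(z1*z2 + z1*z3 + z2*z3)^3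
     - 4*(z1+z2+z3)^3*(z1*z2*z3) - 27*(z1*z2*z3)^2 + 18*(z1+z2+z3)*(z1*z2 + z1*z3 + z2*z3)*(z1*z2*z3)"
    by (simp add: algebra_simps power2_eq_square power3_eq_cube)
  also have "\<dots> = (A^2+3*A+9)^2" unfolding assms
    by (simp add: algebra_simps power2_eq_square power3_eq_cube)
  finally show ?thesis .
qed

lemma cubic_roots:
  fixes a :: int
  obtains z1 z2 z3 :: complex where "z1 + z2 + z3 = of_int a" "z1*z2 + z1*z3 + z2*z3 = - of_int (a+3)"
    "z1*z2*z3 = 1" "{z. poly (cubic a) z = 0} = {z1,z2,z3}"
    "z1 \<noteq> z2" "z1 \<noteq> z3" "z2 \<noteq> z3"
proof -
  have pc: "poly (cubic a) x = x^3 - of_int a * x^2 - (of_int a + 3) * x - 1" for x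
    by (simp add: cubic_def algebra_simps power2_eq_square power3_eq_cube)
  have "\<not> constant (poly (cubic a))"
  proof
    assume "constant (poly (cubic a))"
    hence "poly (cubic a) 0 = poly (cubic a) (-1)" unfolding constant_def by blast
    thus False unfolding pc by (simp add: algebra_simps power2_eq_square power3_eq_cube)
  qed
  then obtain z1 where z1: "poly (cubic a) z1 = 0" using fundamental_theorem_of_algebra by blast
  have nz: "z1 \<noteq> 0" using z1 pc[of 0] by auto
  define c1 where "c1 = z1 - of_int a"
  define c0 where "c0 = 1 / z1"
  define w where "w = csqrt (c1^2 - 4*c0)"
  define z2 where "z2 = (-c1 + w)/2"
  define z3 where "z3 = (-c1 - w)/2"
  have w2: "w^2 = c1^2 - 4*c0" unfolding w_def by simp
  have f1: "z1^3 - of_int a * z1^2 - (of_int a + 3) * z1 - 1 = 0" using z1 pc by simp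
  have e1: "z1 + z2 + z3 = of_int a" unfolding z2_def z3_def c1_def by (simp add: field_simps)
  have s23: "z2 + z3 = - c1" unfolding z2_def z3_def by (simp add: field_simps)
  have p23: "z2 * z3 = c0"
  proof -
    have "z2 * z3 = (c1^2 - w^2)/4" unfolding z2_def z3_def by (simp add: field_simps power2_eq_square)
    thus ?thesis using w2 by simp
  qed
  have e3: "z1*z2*z3 = 1" using p23 nz unfolding c0_def by (simp add: mult.assoc)
  have e2: "z1*z2 + z1*z3 + z2*z3 = - of_int (a+3)"
  proof -
    have "z1*z2 + z1*z3 + z2*z3 = z1 * (z2+z3) + z2*z3" by (simp add: algebra_simps)
    also have "\<dots> = - z1 * c1 + c0" using s23 p23 by simp
    also have "\<dots> = - of_int (a+3)"
    proof -
      have "z1 * (- z1 * c1 + c0) = z1 * (- of_int (a+3))"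
        using f1 nz unfolding c1_def c0_def
        by (simp add: field_simps power2_eq_square power3_eq_cube)
      thus ?thesis using nz by simp
    qed
    finally show ?thesis .
  qed
  have fact: "poly (cubic a) x = (x - z1) * (x - z2) * (x - z3)" for x
  proof -
    have "(x - z1) * (x - z2) * (x - z3) = x^3 - (z1+z2+z3)*x^2 + (z1*z2 + z1*z3 + z2*z3)*x - z1*z2*z3"
      by (simp add: algebra_simps power2_eq_square power3_eq_cube)
    thus ?thesis unfolding pc e1 e2 e3 by (simp add: algebra_simps)
  qed
  have rs: "{z. poly (cubic a) z = 0} = {z1,z2,z3}" unfolding fact by auto
  have disc: "((z1-z2)*(z1-z3)*(z2-z3))^2 = (of_int (a^2+3*a+9))^2"
    using disc_aux[of z1 z2 z3 "of_int a"] e1 e2 e3 by simp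
  have q1: "(2*a+3)^2 + 27 = 4*(a^2+3*a+9)" by (simp add: algebra_simps power2_eq_square)
  have q2: "0 \<le> (2*a+3)^2" by simp
  have aux: "(y::int) + 27 = 4*x \<Longrightarrow> 0 \<le> y \<Longrightarrow> 0 < x" for x y by linarith
  have "0 < a^2+3*a+9" by (rule aux[OF q1 q2])
  hence "a^2+3*a+9 \<noteq> 0" by simp
  hence "(of_int (a^2+3*a+9) :: complex) \<noteq> 0" by (metis of_int_eq_0_iff)
  hence "(z1-z2)*(z1-z3)*(z2-z3) \<noteq> 0" using disc by auto
  thus ?thesis using that[OF e1 e2 e3 rs] by auto
qed

lemma prod1:
  fixes z1 z2 z3 A R :: complex
  assumes "z1 + z2 + z3 = A" "z1*z2 + z1*z3 + z2*z3 = - A - 3" "z1*z2*z3 = 1"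
  shows "(z1*z1 - R*z1)*(z2*z2-R*z2)*(z3*z3-R*z3) = 1 + R*(A+3) + R^2*A - R^3"
proof -
  have "(z1*z1 - R*z1)*(z2*z2-R*z2)*(z3*z3-R*z3) = (z1*z2*z3) * ((z1*z2*z3) - R*(z1*z2 + z1*z3 + z2*z3) + R^2*(z1+z2+z3) - R^3)"
    by (simp add: algebra_simps power2_eq_square power3_eq_cube)
  also have "\<dots> = 1 + R*(A+3) + R^2*A - R^3" unfolding assms
    by (simp add: algebra_simps power2_eq_square power3_eq_cube)
  finally show ?thesis .
qed

lemma prod2:
  fixes z1 z2 z3 A b :: complex
  assumes "z1 + z2 + z3 = A" "z1*z2 + z1*z3 + z2*z3 = - A - 3" "z1*z2*z3 = 1"
  shows "(z1*z1 + b*z1 + 1)*(z2*z2 + b*z2 + 1)*(z3*z3 + b*z3 + 1) = 1 + A*b + (- A - 3)*(b^2-2) + (b^3-3*b) + A^2 + A*(- A - 3)*b + A*(b^2-2) + (- A - 3)^2 + (- A - 3)*b + 1"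
proof -
  have "(z1*z1 + b*z1 + 1)*(z2*z2 + b*z2 + 1)*(z3*z3 + b*z3 + 1) =
    1 + (z1+z2+z3)*b + (z1*z2 + z1*z3 + z2*z3)*(b^2-2) + (z1*z2*z3)*(b^3-3*b) + (z1+z2+z3)^2
    + (z1+z2+z3)*(z1*z2 + z1*z3 + z2*z3)*b + (z1+z2+z3)*(z1*z2*z3)*(b^2-2) + (z1*z2 + z1*z3 + z2*z3)^2
    + (z1*z2 + z1*z3 + z2*z3)*(z1*z2*z3)*b + (z1*z2*z3)^2"
    by (simp add: algebra_simps power2_eq_square power3_eq_cube)
  also have "\<dots> = 1 + A*b + (- A - 3)*(b^2-2) + (b^3-3*b) + A^2 + A*(- A - 3)*b + A*(b^2-2) + (- A - 3)^2 + (- A - 3)*b + 1" unfolding assms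
    by simp
  finally show ?thesis .
qed

lemma ev1: "poly (map_poly of_rat [:0, - of_int r, 1:]) (z::complex) = z*z - of_int r * z"
  by (simp add: map_poly_pCons of_rat_diff of_rat_divide of_rat_add of_rat_mult of_rat_minus algebra_simps)

lemma ev2: "poly (map_poly of_rat [:1/3, 1/3 - of_int (r + 1), 1/3:]) (z::complex) = (z*z + (-3*of_int r - 2)*z + 1)/3"
  apply (simp add: map_poly_pCons of_rat_diff of_rat_divide of_rat_add of_rat_mult of_rat_minus)
  apply (simp add: field_simps)
  done

lemma lin_aux1: "(D::int) = u * v \<Longrightarrow> 0 \<le> u \<Longrightarrow> 0 \<le> v \<Longrightarrow> R - L = D \<Longrightarrow> L \<le> R"
  using mult_nonneg_nonneg[of u v] by linarith

lemma ineq1: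
  fixes a r :: int assumes "1 \<le> r" "3*r \<le> a"
  shows "27*(1 + r*(a+3) + r^2*a - r^3) \<le> (2*a+3)*(a^2+3*a+9)"
proof (rule lin_aux1[OF refl])
  show "(2*a+3)*(a^2+3*a+9) - 27*(1 + r*(a+3) + r^2*a - r^3) = (a-3*r)*(2*a^2+6*a*r-9*r^2+9*a+27)"
    by (simp add: algebra_simps power2_eq_square power3_eq_cube)
  show "0 \<le> a - 3*r" using assms by simp
  have h1: "9*r^2 \<le> 3*a*r" using assms by (simp add: power2_eq_square mult_right_mono)
  have h2: "0 \<le> a*r" using assms by simp
  have h3: "0 \<le> a^2" by simp
  show "0 \<le> 2*a^2+6*a*r-9*r^2+9*a+27" using h1 h2 h3 assms by linarith
qed

lemma lin_aux2: "(L::int) = -x - y + m + k \<Longrightarrow> 0 \<le> x \<Longrightarrow> 0 \<le> y \<Longrightarrow> m \<le> m' \<Longrightarrow> R - (m' + k) = D \<Longrightarrow> 0 < D \<Longrightarrow> L < R"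
  by linarith

lemma ineq2:
  fixes a r :: int assumes "0 \<le> r" "3*r + 3 \<le> a"
    and bd: "b = -3*r-2" and Ad: "A = a"
  shows "1 + A*b + (- A - 3)*(b^2-2) + (b^3-3*b) + A^2 + A*(- A - 3)*b + A*(b^2-2) + (- A - 3)^2 + (- A - 3)*b + 1 < (2*a+3)*(a^2+3*a+9)"
proof (rule lin_aux2)
  define tt where "tt = 3*r+2"
  show "1 + A*b + (- A - 3)*(b^2-2) + (b^3-3*b) + A^2 + A*(- A - 3)*b + A*(b^2-2) + (- A - 3)^2 + (- A - 3)*b + 1
     = - (tt^3) - 3*tt^2 + (a^2+3*a+6)*tt + (2*a^2+6*a+17)"
    unfolding Ad bd tt_def by (simp add: algebra_simps power2_eq_square power3_eq_cube)
  show "0 \<le> tt^3" "0 \<le> 3*tt^2" using assms tt_def by auto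
  have c0: "0 \<le> a^2+3*a+6" using assms by (smt (verit) zero_le_power2)
  show "(a^2+3*a+6)*tt \<le> (a^2+3*a+6)*(a-1)"
    by (rule mult_left_mono[OF _ c0]) (use assms tt_def in simp)
  show "(2*a+3)*(a^2+3*a+9) - ((a^2+3*a+6)*(a-1) + (2*a^2+6*a+17)) = a^3 + 5*a^2 + 18*a + 16"
    by (simp add: algebra_simps power2_eq_square power3_eq_cube)
  have "0 \<le> a^3" "0 \<le> a^2" using assms by auto
  thus "0 < a^3 + 5*a^2 + 18*a + 16" using assms by linarith
qed

theorem lemma7p2:
  fixes a :: int
  defines "\<Delta> \<equiv> a^2 + 3*a + 9"
  assumes "a mod 27 = 3 \<or> a mod 27 = 21"
    and "a > 12"
    and "squarefree (\<Delta> div 27)"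
  shows "(\<forall>r::int. 1 \<le> r \<and> real_of_int r \<le> real_of_int a / 3 \<longrightarrow>
            normK a [:0, - of_int r, 1:] \<in> \<real> \<and>
            Re (normK a [:0, - of_int r, 1:]) \<le> real_of_int ((2*a + 3) * \<Delta>) / 27)
       \<and> (\<forall>r::int. 0 \<le> r \<and> real_of_int r \<le> real_of_int a / 3 - 1 \<longrightarrow>
            normK a [:1/3, 1/3 - of_int (r + 1), 1/3:] \<in> \<real> \<and>
            Re (normK a [:1/3, 1/3 - of_int (r + 1), 1/3:]) < real_of_int ((2*a + 3) * \<Delta>) / 27)"
proof -
  obtain z1 z2 z3 :: complex where e1: "z1 + z2 + z3 = of_int a" and e2: "z1*z2 + z1*z3 + z2*z3 = - of_int (a+3)"
    and e3: "z1*z2*z3 = 1" and rs: "{z. poly (cubic a) z = 0} = {z1,z2,z3}"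
    and d: "z1 \<noteq> z2" "z1 \<noteq> z3" "z2 \<noteq> z3"
    using cubic_roots[of a] by blast
  have e2': "z1*z2 + z1*z3 + z2*z3 = - of_int a - 3" using e2 by simp
  have N: "normK a p = poly (map_poly of_rat p) z1 * poly (map_poly of_rat p) z2 * poly (map_poly of_rat p) z3" for p
    unfolding normK_def rs using d by (simp add: mult.assoc)
  show ?thesis
  proof (intro conjI allI impI; elim conjE)
    fix r :: int assume r1: "1 \<le> r" and r2: "real_of_int r \<le> real_of_int a / 3"
    have r2': "3*r \<le> a" using r2 by linarith
    define M where "M = 1 + r*(a+3) + r^2*a - r^3"
    have NM: "normK a [:0, - of_int r, 1:] = of_int M"
    proof -
      have "normK a [:0, - of_int r, 1:] = 1 + of_int r*(of_int a+3) + (of_int r)^2*of_int a - (of_int r)^3"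
        unfolding N ev1 by (rule prod1[OF e1 e2' e3])
      also have "\<dots> = of_int M" unfolding M_def by simp
      finally show ?thesis .
    qed
    show "normK a [:0, - of_int r, 1:] \<in> \<real>" unfolding NM by simp
    have "27 * M \<le> (2*a+3)*\<Delta>" using ineq1[OF r1 r2'] unfolding M_def \<Delta>_def .
    hence "real_of_int (27*M) \<le> real_of_int ((2*a+3)*\<Delta>)" by (simp only: of_int_le_iff)
    thus "Re (normK a [:0, - of_int r, 1:]) \<le> real_of_int ((2*a + 3) * \<Delta>) / 27"
      unfolding NM by simp
  next
    fix r :: int assume r1: "0 \<le> r" and r2: "real_of_int r \<le> real_of_int a / 3 - 1"
    have r2': "3*r + 3 \<le> a" using r2 by linarith
    define b :: int where "b = -3*r-2"
    define P where "P = 1 + a*b + (- a - 3)*(b^2-2) + (b^3-3*b) + a^2 + a*(- a - 3)*b + a*(b^2-2) + (- a - 3)^2 + (- a - 3)*b + 1"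
    have NM: "normK a [:1/3, 1/3 - of_int (r + 1), 1/3:] = of_int P / 27"
    proof -
      have b': "(-3*of_int r - 2 :: complex) = of_int b" unfolding b_def by simp
      have "normK a [:1/3, 1/3 - of_int (r + 1), 1/3:] =
         ((z1*z1 + of_int b*z1 + 1)*(z2*z2 + of_int b*z2 + 1)*(z3*z3 + of_int b*z3 + 1)) / 27"
        unfolding N ev2 b' by simp
      also have "(z1*z1 + of_int b*z1 + 1)*(z2*z2 + of_int b*z2 + 1)*(z3*z3 + of_int b*z3 + 1) =
         1 + of_int a*of_int b + (- of_int a - 3)*((of_int b)^2-2) + ((of_int b)^3-3*of_int b) + (of_int a)^2 + of_int a*(- of_int a - 3)*of_int b + of_int a*((of_int b)^2-2) + (- of_int a - 3)^2 + (- of_int a - 3)*of_int b + 1"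
        by (rule prod2[OF e1 e2' e3])
      also have "\<dots> = of_int P" unfolding P_def by simp
      finally show ?thesis .
    qed
    show "normK a [:1/3, 1/3 - of_int (r + 1), 1/3:] \<in> \<real>" unfolding NM by simp
    have "P < (2*a+3)*\<Delta>" using ineq2[OF r1 r2' b_def refl] unfolding P_def \<Delta>_def .
    hence "real_of_int P < real_of_int ((2*a+3)*\<Delta>)" by (simp only: of_int_less_iff)
    thus "Re (normK a [:1/3, 1/3 - of_int (r + 1), 1/3:]) < real_of_int ((2*a + 3) * \<Delta>) / 27"
      unfolding NM by simp
  qed
qed

end
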